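(* Let $X$ be a compact space, $Y$ a metrizable space, and $K$ a compact subspace of $C_p(X,Y)$. Then $K$ is an Eberlein compact.
   Context: All compact spaces are assumed Hausdorff. $C_p(X,Y)$ is the space of all continuous functions $X\to Y$ with the topology of pointwise convergence, and $C_p(X)=C_p(X,\mathbb{R})$. A compact space is an Eberlein compact if it is homeomorphic to a compact subspace of $C_p(T)$ for some compact space $T$ (equivalently, to a weakly compact subset of a Banach space). *)

theory Defs
  imports "HOL-Analysis.Analysis"
begin

definition Cp :: "'a topology \<Rightarrow> 'b topology \<Rightarrow> ('a \<Rightarrow> 'b) topology" where
  "Cp X Y = subtopology (product_topology (\<lambda>_. Y) (topspace X))
              {f. continuous_map X Y f \<and> f \<in> extensional (topspace X)}"

text \<open>Since HOL cannot quantify over types, the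
  carrier of T is taken in the type of real-valued functions on the points of K; this is no
  restriction (T may always be replaced by its image under evaluation in C_p(K)).\<close>
definition eberlein_compact :: "'k topology \<Rightarrow> bool" where
  "eberlein_compact K \<longleftrightarrow> compact_space K \<and> Hausdorff_space K \<and>
     (\<exists>(T :: ('k \<Rightarrow> real) topology) S. compact_space T \<and> Hausdorff_space T \<and>
        compactin (Cp T euclideanreal) S \<and>
        K homeomorphic_space subtopology (Cp T euclideanreal) S)"

end

theory Submission
  imports Defs
begin


lemma eberlein_criterion:
  fixes Kt :: "'k topology" and W :: "('k \<Rightarrow> real) set"
  assumes cK: "compact_space Kt" and hK: "Hausdorff_space Kt"
    and cW: "compactin (product_topology (\<lambda>_. euclideanreal) (topspace Kt)) W"
    and ct: "\<And>t. t \<in> W \<Longrightarrow> continuous_map Kt euclideanreal t"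
    and sep: "\<And>f g. f \<in> topspace Kt \<Longrightarrow> g \<in> topspace Kt \<Longrightarrow> f \<noteq> g \<Longrightarrow> \<exists>t\<in>W. t f \<noteq> t g"
  shows "eberlein_compact Kt"
proof -
  define T where "T = subtopology (product_topology (\<lambda>_. euclideanreal) (topspace Kt)) W"
  have WT: "W \<subseteq> topspace (product_topology (\<lambda>_. euclideanreal) (topspace Kt))"
    using cW compactin_subset_topspace by blast
  have tT: "topspace T = W" using WT by (auto simp: T_def)
  have cT: "compact_space T" unfolding T_def using cW by (rule compact_space_subtopology)
  have hT: "Hausdorff_space T" unfolding T_def
    by (intro Hausdorff_space_subtopology) (simp add: Hausdorff_space_product_topology)
  define E where "E = (\<lambda>f. restrict (\<lambda>t. t f) W)"
  have Econt: "continuous_map T euclideanreal (E f)" if "f \<in> topspace Kt" for f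
  proof -
    have "continuous_map T euclideanreal (\<lambda>t. t f)"
      unfolding T_def using that by (intro continuous_map_from_subtopology continuous_map_product_projection)
    then show ?thesis by (rule continuous_map_eq) (simp add: E_def tT)
  qed
  have cE: "continuous_map Kt (Cp T euclideanreal) E"
    unfolding Cp_def
  proof (rule continuous_map_into_subtopology)
    show "continuous_map Kt (product_topology (\<lambda>_. euclideanreal) (topspace T)) E"
      unfolding continuous_map_componentwise
    proof (intro conjI ballI)
      show "E ` topspace Kt \<subseteq> extensional (topspace T)" by (auto simp: E_def tT)
      fix t assume "t \<in> topspace T"
      then have "t \<in> W" by (simp add: tT)
      then show "continuous_map Kt euclideanreal (\<lambda>x. E x t)"
        using ct[of t] by (simp add: E_def)
    qed
    show "E \<in> topspace Kt \<rightarrow> {f. continuous_map T euclideanreal f \<and> f \<in> extensional (topspace T)}"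
      using Econt by (auto simp: E_def tT)
  qed
  have hC: "Hausdorff_space (Cp T euclideanreal)"
    unfolding Cp_def by (intro Hausdorff_space_subtopology) (simp add: Hausdorff_space_product_topology)
  have inj: "inj_on E (topspace Kt)"
  proof (rule inj_onI)
    fix f g assume f: "f \<in> topspace Kt" and g: "g \<in> topspace Kt" and eq: "E f = E g"
    show "f = g"
    proof (rule ccontr)
      assume "f \<noteq> g"
      then obtain t where "t \<in> W" "t f \<noteq> t g" using sep f g by blast
      then have "E f t \<noteq> E g t" by (simp add: E_def)
      with eq show False by simp
    qed
  qed
  have emb: "embedding_map Kt (Cp T euclideanreal) E"
    using continuous_imp_embedding_map[OF cE cK hC inj] .
  have cS: "compactin (Cp T euclideanreal) (E ` topspace Kt)"
    using image_compactin[OF _ cE] cK by (simp add: compact_space_def)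
  show ?thesis
    unfolding eberlein_compact_def
    using cK hK cT hT cS embedding_map_imp_homeomorphic_space[OF emb] by blast
qed



lemma joint_cont:
  assumes Md: "Metric_space M d"
    and f: "continuous_map X (Metric_space.mtopology M d) f"
    and S: "\<And>h y z. h \<in> S \<Longrightarrow> y \<in> M \<Longrightarrow> z \<in> M \<Longrightarrow> \<bar>h y - h z\<bar> \<le> d y z"
  shows "continuous_map (prod_topology X (subtopology (product_topology (\<lambda>_. euclideanreal) M) S))
           euclideanreal (\<lambda>(x,h). h (f x))"
proof -
  interpret Metric_space M d by (fact Md)
  let ?P = "subtopology (product_topology (\<lambda>_. euclideanreal) M) S"
  have "continuous_map (prod_topology X ?P) Met_TC.mtopology (\<lambda>(x,h). h (f x))"
    unfolding Met_TC.continuous_map_to_metric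
  proof (intro ballI allI impI)
    fix p e assume p: "p \<in> topspace (prod_topology X ?P)" and e: "(0::real) < e"
    obtain x0 h0 where p0: "p = (x0,h0)" by fastforce
    have "p \<in> topspace X \<times> topspace ?P" using p by (simp only: topspace_prod_topology)
    then have x0: "x0 \<in> topspace X" and h0: "h0 \<in> topspace ?P" using p0 by auto
    have fx0: "f x0 \<in> M" using continuous_map_image_subset_topspace[OF f] x0 by auto
    define U1 where "U1 = {x \<in> topspace X. f x \<in> mball (f x0) (e/2)}"
    define U2 where "U2 = {h \<in> topspace ?P. h (f x0) \<in> ball (h0 (f x0)) (e/2)}"
    have o1: "openin X U1" unfolding U1_def
      by (rule openin_continuous_map_preimage[OF f openin_mball])
    have cpr: "continuous_map ?P euclideanreal (\<lambda>h. h (f x0))"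
      using fx0 by (intro continuous_map_from_subtopology continuous_map_product_projection)
    have o2: "openin ?P U2" unfolding U2_def
      using openin_continuous_map_preimage[OF cpr, of "ball (h0 (f x0)) (e/2)"] by simp
    show "\<exists>U. openin (prod_topology X ?P) U \<and> p \<in> U \<and>
           (\<forall>y\<in>U. (case y of (x, h) \<Rightarrow> h (f x)) \<in> Met_TC.mball (case p of (x, h) \<Rightarrow> h (f x)) e)"
    proof (intro exI conjI ballI)
      show "openin (prod_topology X ?P) (U1 \<times> U2)" unfolding openin_prod_Times_iff using o1 o2 by blast
      show "p \<in> U1 \<times> U2" using p0 x0 h0 fx0 e by (auto simp: U1_def U2_def)
      fix q assume q: "q \<in> U1 \<times> U2"
      then obtain x h where q0: "q = (x,h)" and x: "x \<in> U1" and h: "h \<in> U2" by blast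
      have fx: "f x \<in> M" and dx: "d (f x0) (f x) < e/2" using x by (auto simp: U1_def)
      have hS: "h \<in> S" and hh: "\<bar>h0 (f x0) - h (f x0)\<bar> < e/2" using h by (auto simp: U2_def dist_real_def)
      have "\<bar>h (f x) - h (f x0)\<bar> \<le> d (f x) (f x0)" using S[OF hS fx fx0] .
      also have "\<dots> = d (f x0) (f x)" by (rule commute)
      finally have "\<bar>h (f x) - h (f x0)\<bar> < e/2" using dx by simp
      with hh have "\<bar>h0 (f x0) - h (f x)\<bar> < e" by linarith
      then show "(case q of (x, h) \<Rightarrow> h (f x)) \<in> Met_TC.mball (case p of (x, h) \<Rightarrow> h (f x)) e"
        using p0 q0 by (simp add: dist_real_def)
    qed
  qed
  then show ?thesis by simp
qed


theorem proposition4p1: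
  fixes X :: "'a topology" and Y :: "'b topology" and K :: "('a \<Rightarrow> 'b) set"
  assumes "compact_space X" and "Hausdorff_space X"
    and "metrizable_space Y"
    and "compactin (Cp X Y) K"
  shows "eberlein_compact (subtopology (Cp X Y) K)"
proof -
  note cX = assms(1) and cKK = assms(4)
  obtain M d where Md: "Metric_space M d" and Y: "Y = Metric_space.mtopology M d"
    using assms(3) unfolding metrizable_space_def by blast
  interpret Metric_space M d by (fact Md)
  define Kt where "Kt = subtopology (Cp X Y) K"
  have KC: "K \<subseteq> topspace (Cp X Y)" using cKK compactin_subset_topspace by blast
  have tK: "topspace Kt = K" using KC unfolding Kt_def by (simp add: Int_absorb1)
  have Kf: "continuous_map X Y f \<and> f \<in> extensional (topspace X)" if "f \<in> K" for f
    using KC that unfolding Cp_def by auto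
  have cK: "compact_space Kt" unfolding Kt_def using cKK by (rule compact_space_subtopology)
  have hY: "Hausdorff_space Y" using assms(3) by (rule metrizable_imp_Hausdorff_space)
  have hK: "Hausdorff_space Kt" unfolding Kt_def Cp_def
    by (intro Hausdorff_space_subtopology) (simp add: Hausdorff_space_product_topology hY)
  define PP where "PP = {h. h \<in> M \<rightarrow>\<^sub>E {0..1::real} \<and> (\<forall>y\<in>M. \<forall>z\<in>M. \<bar>h y - h z\<bar> \<le> d y z)}"
  define Ptop where "Ptop = subtopology (product_topology (\<lambda>_. euclideanreal) M) PP"
  have cPP: "compactin (product_topology (\<lambda>_. euclideanreal) M) PP"
  proof -
    have c1: "compactin (product_topology (\<lambda>_. euclideanreal) M) (M \<rightarrow>\<^sub>E {0..1::real})"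
      by (simp add: compactin_PiE)
    define B where "B = (\<lambda>y. {h \<in> topspace (product_topology (\<lambda>_. euclideanreal) M). h y \<in> {0..1::real}})"
    define C where "C = (\<lambda>(y,z). {h \<in> topspace (product_topology (\<lambda>_. euclideanreal) M). \<bar>h y - h z\<bar> - d y z \<in> {..0::real}})"
    have eq: "PP = \<Inter> (insert (topspace (product_topology (\<lambda>_. euclideanreal) M)) (B ` M \<union> C ` (M \<times> M)))"
      unfolding PP_def B_def C_def by (auto simp: PiE_iff extensional_def)
    have "closedin (product_topology (\<lambda>_. euclideanreal) M) PP"
      unfolding eq
    proof (rule closedin_Inter)
      fix S assume "S \<in> insert (topspace (product_topology (\<lambda>_. euclideanreal) M)) (B ` M \<union> C ` (M \<times> M))"
      then consider "S = topspace (product_topology (\<lambda>_. euclideanreal) M)" | y where "y \<in> M" "S = B y"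
        | y z where "y \<in> M" "z \<in> M" "S = C (y,z)" by blast
      then show "closedin (product_topology (\<lambda>_. euclideanreal) M) S"
      proof cases
        case 1 then show ?thesis by (simp only: closedin_topspace)
      next
        case (2 y)
        have "continuous_map (product_topology (\<lambda>_. euclideanreal) M) euclideanreal (\<lambda>h. h y)"
          using 2 by (intro continuous_map_product_projection)
        then show ?thesis unfolding 2 B_def
          by (rule closedin_continuous_map_preimage) simp
      next
        case (3 y z)
        have "continuous_map (product_topology (\<lambda>_. euclideanreal) M) euclideanreal (\<lambda>h. \<bar>h y - h z\<bar> - d y z)"
          using 3 by (intro continuous_intros)
        then show ?thesis unfolding 3 C_def
          by (simp only: case_prod_conv) (rule closedin_continuous_map_preimage, assumption, simp)
      qed
    qed simp
    moreover have "PP \<subseteq> M \<rightarrow>\<^sub>E {0..1::real}" unfolding PP_def by blast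
    ultimately show ?thesis using closed_compactin[OF c1] by blast
  qed
  have tP: "topspace Ptop = PP"
    using compactin_subset_topspace[OF cPP] unfolding Ptop_def by (simp add: Int_absorb1)
  have cP: "compact_space Ptop" unfolding Ptop_def using cPP by (rule compact_space_subtopology)
  define \<Phi> where "\<Phi> = (\<lambda>(x::'a,h::'b\<Rightarrow>real). restrict (\<lambda>f. h (f x)) K)"
  define W where "W = \<Phi> ` (topspace X \<times> PP)"
  have cPhi: "continuous_map (prod_topology X Ptop) (product_topology (\<lambda>_. euclideanreal) K) \<Phi>"
    unfolding continuous_map_componentwise
  proof (intro conjI ballI)
    show "\<Phi> ` topspace (prod_topology X Ptop) \<subseteq> extensional K"
      by (auto simp: \<Phi>_def)
    fix f assume f: "f \<in> K"
    have fc: "continuous_map X (Metric_space.mtopology M d) f" using Kf[OF f] Y by simp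
    have "continuous_map (prod_topology X Ptop) euclideanreal (\<lambda>(x,h). h (f x))"
      unfolding Ptop_def by (rule joint_cont[OF Md fc]) (auto simp: PP_def)
    moreover have "(\<lambda>(x,h). h (f x)) = (\<lambda>p. \<Phi> p f)" using f by (auto simp: \<Phi>_def)
    ultimately show "continuous_map (prod_topology X Ptop) euclideanreal (\<lambda>p. \<Phi> p f)" by simp
  qed
  have cW: "compactin (product_topology (\<lambda>_. euclideanreal) K) W"
  proof -
    have "compact_space (prod_topology X Ptop)" using cX cP by (simp add: compact_space_prod_topology)
    then have "compactin (prod_topology X Ptop) (topspace X \<times> PP)"
      by (simp add: compact_space_def tP)
    then show ?thesis unfolding W_def using cPhi by (rule image_compactin)
  qed
  have ct: "continuous_map Kt euclideanreal t" if tW: "t \<in> W" for t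
  proof -
    obtain x h where x: "x \<in> topspace X" and h: "h \<in> PP" and t: "t = \<Phi> (x,h)"
      using tW unfolding W_def by blast
    have ev: "continuous_map Kt Y (\<lambda>f. f x)"
      unfolding Kt_def Cp_def
      by (intro continuous_map_from_subtopology continuous_map_product_projection x)
    have hc: "continuous_map Y euclideanreal h"
    proof -
      have "continuous_map mtopology Met_TC.mtopology h"
        unfolding metric_continuous_map[OF Met_TC.Metric_space_axioms]
      proof (intro conjI ballI allI impI)
        fix a and e :: real assume a: "a \<in> M" and e: "0 < e"
        show "\<exists>\<delta>>0. \<forall>z. z \<in> M \<and> d a z < \<delta> \<longrightarrow> dist (h a) (h z) < e"
        proof (intro exI conjI allI impI)
          fix z assume z: "z \<in> M \<and> d a z < e"
          have "\<bar>h a - h z\<bar> \<le> d a z" using h a z unfolding PP_def by blast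
          then show "dist (h a) (h z) < e" using z by (simp add: dist_real_def)
        qed (fact e)
      qed simp
      then show ?thesis using Y by simp
    qed
    have "continuous_map Kt euclideanreal (h \<circ> (\<lambda>f. f x))"
      using ev hc by (rule continuous_map_compose)
    then show ?thesis
      by (rule continuous_map_eq) (simp add: t \<Phi>_def tK)
  qed
  have sep: "\<exists>t\<in>W. t f \<noteq> t g" if f: "f \<in> topspace Kt" and g: "g \<in> topspace Kt" and fg: "f \<noteq> g" for f g
  proof -
    have fK: "f \<in> K" and gK: "g \<in> K" using f g tK by auto
    obtain x where x: "x \<in> topspace X" and ne: "f x \<noteq> g x"
      using Kf[OF fK] Kf[OF gK] fg extensionalityI by metis
    have fxM: "f x \<in> M" and gxM: "g x \<in> M"
      using x continuous_map_image_subset_topspace[of X Y f] continuous_map_image_subset_topspace[of X Y g]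
        Kf[OF fK] Kf[OF gK] Y by auto
    define h where "h = restrict (\<lambda>y. min (d y (f x)) 1) M"
    have hP: "h \<in> PP"
      unfolding PP_def
    proof (intro CollectI conjI ballI)
      show "h \<in> M \<rightarrow>\<^sub>E {0..1}" by (auto simp: h_def)
      fix y z assume y: "y \<in> M" and z: "z \<in> M"
      have t1: "d y (f x) \<le> d y z + d z (f x)" using triangle y z fxM by blast
      have t2: "d z (f x) \<le> d z y + d y (f x)" using triangle y z fxM by blast
      have "d z y = d y z" by (rule commute)
      then show "\<bar>h y - h z\<bar> \<le> d y z" using t1 t2 y z unfolding h_def by (auto simp: abs_le_iff)
    qed
    have "\<Phi> (x,h) f = 0" using fK fxM by (simp add: \<Phi>_def h_def)
    moreover have "\<Phi> (x,h) g \<noteq> 0"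
    proof -
      have "d (g x) (f x) \<noteq> 0" using gxM fxM ne by simp
      then have "d (g x) (f x) > 0" using nonneg[of "g x" "f x"] by linarith
      then show ?thesis using gK gxM by (simp add: \<Phi>_def h_def)
    qed
    moreover have "\<Phi> (x,h) \<in> W" using x hP unfolding W_def by blast
    ultimately show ?thesis by metis
  qed
  show ?thesis
    unfolding Kt_def[symmetric]
    by (rule eberlein_criterion[OF cK hK _ ct sep]) (use cW tK in auto)
qed

end
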